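(* Consider the system of ordinary differential equations \[ \dot u=r_{1}u(1-u)-a_{12}uv-a_{13}uw,\qquad \dot v=r_{2}v(1-v)+a_{21}uv,\qquad \dot w=-\mu w+a_{31}uw, \] with all parameters $r_1,r_2,\mu,a_{12},a_{13},a_{21},a_{31}$ positive. Assume $r_{1}>a_{12}$ and $\mu\ge a_{31}u^*_{12}$, where \[ u^*_{12}=\frac{r_{2}(r_{1}-a_{12})}{r_{1}r_{2}+a_{12}a_{21}},\qquad v^*_{12}=\frac{r_{1}r_{2}+r_{1}a_{21}}{r_{1}r_{2}+a_{12}a_{21}}. \] Then the equilibrium $E_{12}=(u^*_{12},v^*_{12},0)$ exists (lies in the nonnegative orthant with $u^*_{12},v^*_{12}>0$) and it is globally asymptotically stable, i.e. it is stable and every solution with $u(0)>0$, $v(0)>0$, $w(0)\ge 0$ converges to $E_{12}$ as $t\to\infty$.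
   Context: $u,v,w$ denote population densities of three species; solutions are considered in the nonnegative orthant. *)

theory Defs
  imports "HOL-Analysis.Analysis"
begin

text \<open>Parameters are bundled as (r1, r2, mu, a12, a13, a21, a31).\<close>

type_synonym params = "real \<times> real \<times> real \<times> real \<times> real \<times> real \<times> real"

definition field :: "params \<Rightarrow> real \<times> real \<times> real \<Rightarrow> real \<times> real \<times> real" where
  "field p x = (case p of (r1, r2, mu, a12, a13, a21, a31) \<Rightarrow>
     (case x of (u, v, w) \<Rightarrow>
       (r1 * u * (1 - u) - a12 * u * v - a13 * u * w,
        r2 * v * (1 - v) + a21 * u * v,
        - mu * w + a31 * u * w)))"

definition is_solution :: "params \<Rightarrow> (real \<Rightarrow> real \<times> real \<times> real) \<Rightarrow> bool" where
  "is_solution p x \<longleftrightarrow>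
     (\<forall>t\<ge>0. (x has_vector_derivative field p (x t)) (at t within {0..}))"

definition nonneg_orthant :: "(real \<times> real \<times> real) set" where
  "nonneg_orthant = {(u, v, w). u \<ge> 0 \<and> v \<ge> 0 \<and> w \<ge> 0}"

definition stable :: "params \<Rightarrow> real \<times> real \<times> real \<Rightarrow> bool" where
  "stable p E \<longleftrightarrow>
     (\<forall>\<epsilon>>0. \<exists>\<delta>>0. \<forall>x. is_solution p x \<and> x 0 \<in> nonneg_orthant \<and> dist (x 0) E < \<delta>
        \<longrightarrow> (\<forall>t\<ge>0. dist (x t) E < \<epsilon>))"

definition globally_asymptotically_stable :: "params \<Rightarrow> real \<times> real \<times> real \<Rightarrow> bool" where
  "globally_asymptotically_stable p E \<longleftrightarrow>
     stable p E \<and>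
     (\<forall>x. is_solution p x \<and> fst (x 0) > 0 \<and> fst (snd (x 0)) > 0 \<and> snd (snd (x 0)) \<ge> 0
        \<longrightarrow> (x \<longlongrightarrow> E) at_top)"

end

theory Submission
  imports Defs
begin
definition Phi :: "real \<Rightarrow> real \<Rightarrow> real" where
  "Phi s z = z - s - s * ln (z / s)"

lemma Phi_ge:
  assumes s: "s > 0" and z: "z > 0" and z0: "z0 > 0"
  shows "Phi s z \<ge> (z0 - s) * (z - z0) / z0"
proof -
  have "ln (z / s) = ln (z / z0) + ln (z0 / s)"
    using s z z0 by (simp add: ln_div)
  also have "\<dots> \<le> (z / z0 - 1) + (z0 / s - 1)"
    using s z z0 by (intro add_mono ln_le_minus_one) auto
  finally have h: "s * ln (z / s) \<le> s * ((z / z0 - 1) + (z0 / s - 1))"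
    using s by (simp add: mult_left_mono)
  have "(z0 - s) * (z - z0) / z0 = z - s - s * ((z / z0 - 1) + (z0 / s - 1))"
    using s z0 by (simp add: field_simps)
  then show ?thesis using h unfolding Phi_def by linarith
qed

lemma Phi_le:
  assumes s: "s > 0" and z: "z > 0"
  shows "Phi s z \<le> (z - s)^2 / z"
proof -
  have "ln (s / z) \<le> s / z - 1" using s z by (intro ln_le_minus_one) auto
  moreover have "ln (s / z) = - ln (z / s)" using s z by (simp add: ln_div)
  ultimately have h: "s * ln (z / s) \<ge> s * (1 - s / z)"
    using s by (intro mult_left_mono) auto
  have "(z - s)^2 / z = z - s - s * (1 - s / z)"
    using z by (simp add: field_simps power2_eq_square)
  then show ?thesis using h unfolding Phi_def by linarith
qed

lemma Phi_nonneg: "s > 0 \<Longrightarrow> z > 0 \<Longrightarrow> Phi s z \<ge> 0"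
  using Phi_ge[of s z s] by simp

lemma Phi_lin:
  assumes "s > 0" "z > 0" shows "Phi s z \<ge> (z - 2 * s) / 2"
proof -
  have "Phi s z \<ge> (2 * s - s) * (z - 2 * s) / (2 * s)" using Phi_ge[of s z "2 * s"] assms by simp
  moreover have "(2 * s - s) * (z - 2 * s) / (2 * s) = (z - 2 * s) / 2" using assms by (simp add: field_simps)
  ultimately show ?thesis by linarith
qed

lemma Phi_sep:
  assumes s: "s > 0" and z: "z > 0" and e: "0 < e" "e \<le> s / 2" and d: "\<bar>z - s\<bar> \<ge> e"
  shows "Phi s z \<ge> e^2 / (5 * s)"
proof (cases "z \<ge> s")
  case True
  then have zz: "z - (s + e/2) \<ge> e/2" using d by auto
  have "Phi s z \<ge> (s + e/2 - s) * (z - (s + e/2)) / (s + e/2)"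
    using Phi_ge[of s z "s + e/2"] s z e by simp
  moreover have "(s + e/2 - s) * (z - (s + e/2)) / (s + e/2) \<ge> (e/2) * (e/2) / (s + e/2)"
    using zz e s by (intro divide_right_mono mult_left_mono) auto
  moreover have "(e/2) * (e/2) / (s + e/2) \<ge> e^2 / (5 * s)"
    using e s by (simp add: field_simps power2_eq_square)
  ultimately show ?thesis by linarith
next
  case False
  then have zz: "(s - e/2) - z \<ge> e/2" using d by auto
  have "Phi s z \<ge> (s - e/2 - s) * (z - (s - e/2)) / (s - e/2)"
    using Phi_ge[of s z "s - e/2"] s z e by simp
  moreover have "(s - e/2 - s) * (z - (s - e/2)) / (s - e/2) = (e/2) * ((s - e/2) - z) / (s - e/2)" by (simp add: algebra_simps)
  moreover have "(e/2) * ((s - e/2) - z) / (s - e/2) \<ge> (e/2) * (e/2) / (s - e/2)"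
    using zz e s by (intro divide_right_mono mult_left_mono) auto
  moreover have "(e/2) * (e/2) / (s - e/2) \<ge> e^2 / (5 * s)"
    using e s by (simp add: field_simps power2_eq_square)
  ultimately show ?thesis by linarith
qed

lemma deriv_le:
  fixes f f' :: "real \<Rightarrow> real"
  assumes "a \<le> b" "continuous_on {a..b} f"
    and "\<And>t. a < t \<Longrightarrow> t < b \<Longrightarrow> (f has_real_derivative f' t) (at t)"
    and "\<And>t. a < t \<Longrightarrow> t < b \<Longrightarrow> f' t \<le> c"
  shows "f b - f a \<le> c * (b - a)"
proof -
  have "(\<lambda>t. f t - c * t) a \<ge> (\<lambda>t. f t - c * t) b"
  proof (rule DERIV_nonpos_imp_decreasing_open[OF assms(1)])
    fix t assume "a < t" "t < b"
    then show "\<exists>y. ((\<lambda>t. f t - c * t) has_real_derivative y) (at t) \<and> y \<le> 0"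
      using assms(3,4) by (intro exI[of _ "f' t - c"]) (auto intro!: derivative_eq_intros)
  next
    show "continuous_on {a..b} (\<lambda>t. f t - c * t)"
      using assms(2) by (intro continuous_intros)
  qed
  then show ?thesis by (simp add: algebra_simps)
qed

lemma deriv_ge:
  fixes f f' :: "real \<Rightarrow> real"
  assumes "a \<le> b" "continuous_on {a..b} f"
    and "\<And>t. a < t \<Longrightarrow> t < b \<Longrightarrow> (f has_real_derivative f' t) (at t)"
    and "\<And>t. a < t \<Longrightarrow> t < b \<Longrightarrow> f' t \<ge> c"
  shows "f b - f a \<ge> c * (b - a)"
proof -
  have "(\<lambda>t. - f t) b - (\<lambda>t. - f t) a \<le> (-c) * (b - a)"
    by (rule deriv_le[where f'="\<lambda>t. - f' t"]) (use assms in \<open>auto intro!: derivative_eq_intros continuous_intros\<close>)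
  then show ?thesis by (simp add: algebra_simps)
qed

lemma pos_pres:
  fixes y g :: "real \<Rightarrow> real"
  assumes cy: "continuous_on {0..} y" and cg: "continuous_on {0..} g"
    and d: "\<And>t. t > 0 \<Longrightarrow> (y has_real_derivative y t * g t) (at t)" and T: "T > 0"
  shows "y T = y 0 * exp (integral {0..T} g)"
proof -
  define G where "G t = integral {0..t} g" for t
  have cgT: "continuous_on {0..T} g" using cg by (rule continuous_on_subset) auto
  have dG: "(G has_vector_derivative g t) (at t within {0..T})" if "t \<in> {0..T}" for t
    unfolding G_def by (rule integral_has_vector_derivative[OF cgT that])
  have cG: "continuous_on {0..T} G"
    using dG has_vector_derivative_continuous continuous_on_eq_continuous_within by blast
  define F where "F t = y t * exp (- G t)" for t
  have "F T = F 0"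
  proof (rule DERIV_isconst_end[OF T])
    show "continuous_on {0..T} F" unfolding F_def
      using cG continuous_on_subset[OF cy, of "{0..T}"] by (auto intro!: continuous_intros)
    fix t assume t: "0 < t" "t < T"
    have "(G has_real_derivative g t) (at t)"
      using dG[of t] t at_within_interior[of t "{0..T}"]
      by (simp add: has_real_derivative_iff_has_vector_derivative)
    then show "(F has_real_derivative 0) (at t)" unfolding F_def
      using d[of t] t by (auto intro!: derivative_eq_intros simp: algebra_simps)
  qed
  moreover have G0: "G 0 = 0" by (simp add: G_def)
  ultimately have "y T * exp (- G T) = y 0" by (simp add: F_def)
  then have "y T = y 0 * exp (G T)" by (simp add: exp_minus field_simps)
  then show ?thesis by (simp add: G_def)
qed

lemma pos_pres_sign:
  fixes y g :: "real \<Rightarrow> real"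
  assumes cy: "continuous_on {0..} y" and cg: "continuous_on {0..} g"
    and d: "\<And>t. t > 0 \<Longrightarrow> (y has_real_derivative y t * g t) (at t)" and T: "T \<ge> 0"
  shows "y 0 > 0 \<Longrightarrow> y T > 0" and "y 0 \<ge> 0 \<Longrightarrow> y T \<ge> 0"
proof -
  have "y T = y 0 * exp (integral {0..T} g)"
  proof (cases "T = 0")
    case True then show ?thesis by simp
  next
    case False then show ?thesis using pos_pres[OF cy cg d] T by simp
  qed
  then show "y 0 > 0 \<Longrightarrow> y T > 0" and "y 0 \<ge> 0 \<Longrightarrow> y T \<ge> 0" by simp_all
qed

lemma Phi_deriv:
  assumes s: "s > 0" and z: "f t > 0" and d: "(f has_real_derivative f') (at t)"
  shows "((\<lambda>t. Phi s (f t)) has_real_derivative (1 - s / f t) * f') (at t)"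
  unfolding Phi_def using s z d
  by (auto intro!: derivative_eq_intros simp: field_simps)

lemma Phi_cont:
  assumes s: "s > 0" and z: "\<And>t. t \<in> S \<Longrightarrow> f t > 0" and c: "continuous_on S f"
  shows "continuous_on S (\<lambda>t. Phi s (f t))"
proof -
  have "\<And>t. t \<in> S \<Longrightarrow> f t / s \<noteq> 0" using s z by (metis divide_eq_0_iff less_irrefl)
  then show ?thesis unfolding Phi_def using c by (intro continuous_intros) auto
qed

lemma Vdot_alg:
  fixes U W Y us vs r1 a12 a13 c1 a21 r2 c2 mu k a31 :: real
  assumes e1: "r1 * (1 - us) = a12 * vs" and e2: "r2 * (1 - vs) = - a21 * us"
    and c1a: "c1 * a21 = a12" and c2a: "c2 * a31 = a13" and kd: "k = c2 * mu - a13 * us"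
  shows "(U - us) * (r1 * (1 - U) - a12 * Y - a13 * W) + c1 * ((Y - vs) * (r2 * (1 - Y) + a21 * U))
     + c2 * (W * (- mu + a31 * U)) = - (r1 * (U - us)^2) - c1 * r2 * (Y - vs)^2 - k * W"
proof -
  have "(U - us) * (r1 * (1 - U) - a12 * Y - a13 * W) =
        (U - us) * (r1 * (1 - us) - r1 * (U - us) - a12 * Y - a13 * W)" by (simp add: algebra_simps)
  also have "\<dots> = (U - us) * (a12 * vs - r1 * (U - us) - a12 * Y - a13 * W)" by (simp only: e1)
  finally have A: "(U - us) * (r1 * (1 - U) - a12 * Y - a13 * W) =
       (U - us) * (a12 * vs - r1 * (U - us) - a12 * Y - a13 * W)" .
  have "(Y - vs) * (r2 * (1 - Y) + a21 * U) = (Y - vs) * (r2 * (1 - vs) - r2 * (Y - vs) + a21 * U)"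
    by (simp add: algebra_simps)
  also have "\<dots> = (Y - vs) * (- a21 * us - r2 * (Y - vs) + a21 * U)" by (simp only: e2)
  finally have B: "c1 * ((Y - vs) * (r2 * (1 - Y) + a21 * U)) =
     c1 * ((Y - vs) * (- a21 * us - r2 * (Y - vs) + a21 * U))" by simp
  have "c1 * ((Y - vs) * (- a21 * us - r2 * (Y - vs) + a21 * U)) =
     (c1 * a21) * (Y - vs) * (U - us) - c1 * r2 * (Y - vs)^2"
    by (simp add: algebra_simps power2_eq_square)
  then have C: "c1 * ((Y - vs) * (- a21 * us - r2 * (Y - vs) + a21 * U)) =
     a12 * (Y - vs) * (U - us) - c1 * r2 * (Y - vs)^2" by (simp only: c1a)
  have "c2 * (W * (- mu + a31 * U)) = - c2 * mu * W + (c2 * a31) * W * U"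
    by (simp add: algebra_simps)
  then have D: "c2 * (W * (- mu + a31 * U)) = - c2 * mu * W + a13 * W * U" by (simp only: c2a)
  show ?thesis unfolding A B C D kd by (simp add: algebra_simps power2_eq_square)
qed

lemma omd: fixes z s A :: real assumes "z > 0" shows "(1 - s / z) * (z * A) = (z - s) * A"
  using assms by (simp add: field_simps)

locale params =
  fixes r1 r2 mu a12 a13 a21 a31 :: real
  assumes pos: "r1 > 0" "r2 > 0" "mu > 0" "a12 > 0" "a13 > 0" "a21 > 0" "a31 > 0"
    and r1a: "r1 > a12"
    and muge: "mu \<ge> a31 * (r2 * (r1 - a12) / (r1 * r2 + a12 * a21))"
begin

definition "us = r2 * (r1 - a12) / (r1 * r2 + a12 * a21)"
definition "vs = (r1 * r2 + r1 * a21) / (r1 * r2 + a12 * a21)"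
definition "c1 = a12 / a21"
definition "c2 = a13 / a31"
definition "k = c2 * mu - a13 * us"

lemma D_pos: "r1 * r2 + a12 * a21 > 0" using pos by (simp add: add_pos_pos)
lemma us_pos: "us > 0" unfolding us_def using pos r1a D_pos by simp
lemma vs_pos: "vs > 0" unfolding vs_def using pos D_pos by (simp add: add_pos_pos)
lemma c1_pos: "c1 > 0" unfolding c1_def using pos by simp
lemma c2_pos: "c2 > 0" unfolding c2_def using pos by simp
lemma c1a: "c1 * a21 = a12" unfolding c1_def using pos by simp
lemma c2a: "c2 * a31 = a13" unfolding c2_def using pos by simp
lemma k_nonneg: "k \<ge> 0"
proof -
  have "a31 * us \<le> mu" using muge by (simp add: us_def)
  then have "us \<le> mu / a31" using pos by (simp add: field_simps)
  then have "a13 * us \<le> a13 * (mu / a31)" using pos by (intro mult_left_mono) auto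
  then show ?thesis unfolding k_def c2_def by simp
qed
lemma eq1: "r1 * (1 - us) - a12 * vs = 0"
  unfolding us_def vs_def using D_pos by (simp add: field_simps algebra_simps)
lemma eq2: "r2 * (1 - vs) + a21 * us = 0"
  unfolding us_def vs_def using D_pos by (simp add: field_simps algebra_simps)

lemma Vdot_identity:
  fixes U W Y :: real
  shows "(U - us) * (r1 * (1 - U) - a12 * Y - a13 * W) + c1 * ((Y - vs) * (r2 * (1 - Y) + a21 * U))
     + c2 * (W * (- mu + a31 * U)) = - (r1 * (U - us)^2) - c1 * r2 * (Y - vs)^2 - k * W"
  by (rule Vdot_alg) (use eq1 eq2 c1a c2a k_def in auto)

end

locale traj = params +
  fixes x :: "real \<Rightarrow> real \<times> real \<times> real"
  assumes sol: "is_solution (r1, r2, mu, a12, a13, a21, a31) x"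
    and init: "fst (x 0) > 0" "fst (snd (x 0)) > 0" "snd (snd (x 0)) \<ge> 0"
begin

definition "u t = fst (x t)"
definition "v t = fst (snd (x t))"
definition "w t = snd (snd (x t))"
definition "V t = Phi us (u t) + c1 * Phi vs (v t) + c2 * w t"

lemma xuvw: "x t = (u t, v t, w t)" by (simp add: u_def v_def w_def)

lemma dx: "t > 0 \<Longrightarrow> (x has_vector_derivative field (r1, r2, mu, a12, a13, a21, a31) (x t)) (at t)"
proof -
  assume t: "t > 0"
  then have "(x has_vector_derivative field (r1, r2, mu, a12, a13, a21, a31) (x t)) (at t within {0..})"
    using sol unfolding is_solution_def by simp
  moreover have "at t within {0..} = at t"
    using t by (intro at_within_interior) (simp add: interior_Ici[of "-1" "0::real"])
  ultimately show ?thesis by simp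
qed

lemma cx: "continuous_on {0..} x"
  using sol unfolding is_solution_def
  by (metis has_vector_derivative_continuous continuous_on_eq_continuous_within atLeast_iff)

lemma cu: "continuous_on {0..} u" unfolding u_def[abs_def] using cx by (intro continuous_intros)
lemma cv: "continuous_on {0..} v" unfolding v_def[abs_def] using cx by (intro continuous_intros)
lemma cw: "continuous_on {0..} w" unfolding w_def[abs_def] using cx by (intro continuous_intros)

lemma dxc:
  assumes "t > 0"
  shows "(u has_real_derivative u t * (r1 * (1 - u t) - a12 * v t - a13 * w t)) (at t)"
    "(v has_real_derivative v t * (r2 * (1 - v t) + a21 * u t)) (at t)"
    "(w has_real_derivative w t * (- mu + a31 * u t)) (at t)"
proof -
  define F where "F = field (r1, r2, mu, a12, a13, a21, a31) (x t)"
  have h: "(x has_derivative (\<lambda>h. h *\<^sub>R F)) (at t)"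
    using dx[OF assms] by (simp add: has_vector_derivative_def F_def)
  have F: "F = (u t * (r1 * (1 - u t) - a12 * v t - a13 * w t),
                 v t * (r2 * (1 - v t) + a21 * u t), w t * (- mu + a31 * u t))"
    unfolding F_def by (cases "x t") (simp add: field_def u_def v_def w_def algebra_simps)
  have "(u has_derivative (\<lambda>h. fst (h *\<^sub>R F))) (at t)"
    unfolding u_def[abs_def] by (rule has_derivative_fst[OF h])
  moreover have "(\<lambda>h. fst (h *\<^sub>R F)) = (*) (fst F)" by (simp add: fun_eq_iff mult.commute)
  ultimately have "(u has_real_derivative fst F) (at t)" by (simp add: has_field_derivative_def)
  then show "(u has_real_derivative u t * (r1 * (1 - u t) - a12 * v t - a13 * w t)) (at t)"
    by (rule DERIV_cong) (simp only: F fst_conv)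
  have "(v has_derivative (\<lambda>h. fst (snd (h *\<^sub>R F)))) (at t)"
    unfolding v_def[abs_def] by (rule has_derivative_fst[OF has_derivative_snd[OF h]])
  moreover have "(\<lambda>h. fst (snd (h *\<^sub>R F))) = (*) (fst (snd F))" by (simp add: fun_eq_iff mult.commute)
  ultimately have "(v has_real_derivative fst (snd F)) (at t)" by (simp add: has_field_derivative_def)
  then show "(v has_real_derivative v t * (r2 * (1 - v t) + a21 * u t)) (at t)"
    by (rule DERIV_cong) (simp only: F fst_conv snd_conv)
  have "(w has_derivative (\<lambda>h. snd (snd (h *\<^sub>R F)))) (at t)"
    unfolding w_def[abs_def] by (rule has_derivative_snd[OF has_derivative_snd[OF h]])
  moreover have "(\<lambda>h. snd (snd (h *\<^sub>R F))) = (*) (snd (snd F))" by (simp add: fun_eq_iff mult.commute)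
  ultimately have "(w has_real_derivative snd (snd F)) (at t)" by (simp add: has_field_derivative_def)
  then show "(w has_real_derivative w t * (- mu + a31 * u t)) (at t)"
    by (rule DERIV_cong) (simp only: F fst_conv snd_conv)
qed

lemma upos: "t \<ge> 0 \<Longrightarrow> u t > 0"
  by (rule pos_pres_sign(1)[OF cu _ dxc(1)])
     (use init in \<open>auto simp: u_def intro!: continuous_intros cx cu cv cw\<close>)
lemma vpos: "t \<ge> 0 \<Longrightarrow> v t > 0"
  by (rule pos_pres_sign(1)[OF cv _ dxc(2)])
     (use init in \<open>auto simp: v_def intro!: continuous_intros cx cu cv cw\<close>)
lemma wnn: "t \<ge> 0 \<Longrightarrow> w t \<ge> 0"
  by (rule pos_pres_sign(2)[OF cw _ dxc(3)])
     (use init in \<open>auto simp: w_def intro!: continuous_intros cx cu cv cw\<close>)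

lemma dV: assumes t: "t > 0" shows "(V has_real_derivative
    - (r1 * (u t - us)^2) - c1 * r2 * (v t - vs)^2 - k * w t) (at t)"
proof -
  have dd: "(V has_real_derivative
      (1 - us / u t) * (u t * (r1 * (1 - u t) - a12 * v t - a13 * w t))
      + c1 * ((1 - vs / v t) * (v t * (r2 * (1 - v t) + a21 * u t)))
      + c2 * (w t * (- mu + a31 * u t))) (at t)"
  proof -
    have d1: "((\<lambda>t. Phi us (u t)) has_real_derivative (1 - us / u t) * (u t * (r1 * (1 - u t) - a12 * v t - a13 * w t))) (at t)"
      by (rule Phi_deriv[OF us_pos upos dxc(1)]) (use t in auto)
    have d2: "((\<lambda>t. Phi vs (v t)) has_real_derivative (1 - vs / v t) * (v t * (r2 * (1 - v t) + a21 * u t))) (at t)"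
      by (rule Phi_deriv[OF vs_pos vpos dxc(2)]) (use t in auto)
    note d3 = dxc(3)[OF t]
    show ?thesis unfolding V_def[abs_def]
      by (rule DERIV_add[OF DERIV_add[OF d1 DERIV_cmult[OF d2]] DERIV_cmult[OF d3]])
  qed
  have e1: "(1 - us / u t) * (u t * (r1 * (1 - u t) - a12 * v t - a13 * w t))
      = (u t - us) * (r1 * (1 - u t) - a12 * v t - a13 * w t)"
    using upos[of t] t by (intro omd) auto
  have e2: "(1 - vs / v t) * (v t * (r2 * (1 - v t) + a21 * u t))
      = (v t - vs) * (r2 * (1 - v t) + a21 * u t)"
    using vpos[of t] t by (intro omd) auto
  show ?thesis
    by (rule DERIV_cong[OF dd]) (simp only: e1 e2 Vdot_identity)
qed

lemma cV: "continuous_on {0..} V"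
proof -
  have "continuous_on {0..} (\<lambda>t. Phi us (u t))" by (rule Phi_cont[OF us_pos upos cu]) simp
  moreover have "continuous_on {0..} (\<lambda>t. Phi vs (v t))" by (rule Phi_cont[OF vs_pos vpos cv]) simp
  ultimately show ?thesis unfolding V_def[abs_def] using cw by (intro continuous_intros)
qed

lemma V_mono: assumes "0 \<le> a" "a \<le> b" shows "V b \<le> V a"
proof -
  have "V b - V a \<le> 0 * (b - a)"
  proof (rule deriv_le[OF assms(2)])
    show "continuous_on {a..b} V" using cV by (rule continuous_on_subset) (use assms in auto)
  next
    fix t assume "a < t" "t < b"
    then show "(V has_real_derivative - (r1 * (u t - us)^2) - c1 * r2 * (v t - vs)^2 - k * w t) (at t)"
      and "- (r1 * (u t - us)^2) - c1 * r2 * (v t - vs)^2 - k * w t \<le> 0"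
    proof -
      show "(V has_real_derivative - (r1 * (u t - us)^2) - c1 * r2 * (v t - vs)^2 - k * w t) (at t)"
        using assms \<open>a < t\<close> by (intro dV) linarith
      have "k * w t \<ge> 0" using k_nonneg wnn[of t] assms \<open>a < t\<close> by auto
      moreover have "r1 * (u t - us)^2 \<ge> 0" using pos by auto
      moreover have "c1 * r2 * (v t - vs)^2 \<ge> 0" using pos c1_pos by auto
      ultimately show "- (r1 * (u t - us)^2) - c1 * r2 * (v t - vs)^2 - k * w t \<le> 0" by linarith
    qed
  qed
  then show ?thesis by simp
qed

end

lemma sq_tendsto:
  fixes f :: "real \<Rightarrow> real"
  assumes "((\<lambda>t. (f t - c)^2) \<longlongrightarrow> 0) at_top"
  shows "(f \<longlongrightarrow> c) at_top"
proof -
  have "((\<lambda>t. sqrt ((f t - c)^2)) \<longlongrightarrow> sqrt 0) at_top"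
    by (intro tendsto_intros assms)
  then have "((\<lambda>t. \<bar>f t - c\<bar>) \<longlongrightarrow> 0) at_top" by simp
  then have "((\<lambda>t. f t - c) \<longlongrightarrow> 0) at_top" by (simp add: tendsto_rabs_zero_iff)
  then show ?thesis by (simp add: Lim_null[symmetric])
qed

lemma sq_deriv:
  fixes f :: "real \<Rightarrow> real"
  assumes "(f has_real_derivative f') (at t)"
  shows "((\<lambda>t. (f t - c)^2) has_real_derivative 2 * (f t - c) * f') (at t)"
  using assms by (auto intro!: derivative_eq_intros)

context traj begin

definition "V0 = V 0"
definition "Bu = 2 * us + 2 * V0"
definition "Bv = 2 * vs + 2 * V0 / c1"
definition "Bw = V0 / c2"
definition "gq t = (u t - us)^2 + (v t - vs)^2"
definition "Dg z = 2 * (fst z - us) * (fst z * (r1 * (1 - fst z) - a12 * fst (snd z) - a13 * snd (snd z)))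
   + 2 * (fst (snd z) - vs) * (fst (snd z) * (r2 * (1 - fst (snd z)) + a21 * fst z))"
definition "mm = min r1 (c1 * r2)"
definition "KK = {0..Bu} \<times> {0..Bv} \<times> {0..Bw}"

lemma Phi_u_nn: "t \<ge> 0 \<Longrightarrow> Phi us (u t) \<ge> 0" using Phi_nonneg us_pos upos by blast
lemma Phi_v_nn: "t \<ge> 0 \<Longrightarrow> Phi vs (v t) \<ge> 0" using Phi_nonneg vs_pos vpos by blast

lemma V_nn: "t \<ge> 0 \<Longrightarrow> V t \<ge> 0"
  unfolding V_def using Phi_u_nn[of t] Phi_v_nn[of t] c1_pos c2_pos wnn[of t]
  by (intro add_nonneg_nonneg mult_nonneg_nonneg) auto

lemma V_le0: "t \<ge> 0 \<Longrightarrow> V t \<le> V0" using V_mono[of 0 t] by (simp add: V0_def)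

lemma u_bd: "t \<ge> 0 \<Longrightarrow> u t \<le> Bu"
proof -
  assume t: "t \<ge> 0"
  have "Phi us (u t) \<le> V0"
    using V_le0[OF t] Phi_v_nn[OF t] c1_pos c2_pos wnn[OF t] unfolding V_def
    by (smt (verit) mult_nonneg_nonneg)
  moreover have "(u t - 2 * us) / 2 \<le> Phi us (u t)" using Phi_lin us_pos upos[OF t] by blast
  ultimately show ?thesis unfolding Bu_def by (simp add: field_simps)
qed

lemma v_bd: "t \<ge> 0 \<Longrightarrow> v t \<le> Bv"
proof -
  assume t: "t \<ge> 0"
  have "c1 * Phi vs (v t) \<le> V0"
    using V_le0[OF t] Phi_u_nn[OF t] c1_pos c2_pos wnn[OF t] unfolding V_def
    by (smt (verit) mult_nonneg_nonneg)
  then have "(c1 * Phi vs (v t)) / c1 \<le> V0 / c1" using c1_pos by (intro divide_right_mono) auto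
  then have "Phi vs (v t) \<le> V0 / c1" using c1_pos by simp
  moreover have "(v t - 2 * vs) / 2 \<le> Phi vs (v t)" using Phi_lin vs_pos vpos[OF t] by blast
  ultimately show ?thesis unfolding Bv_def by (simp add: field_simps)
qed

lemma w_bd: "t \<ge> 0 \<Longrightarrow> w t \<le> Bw"
proof -
  assume t: "t \<ge> 0"
  have "c2 * w t \<le> V0"
    using V_le0[OF t] Phi_u_nn[OF t] Phi_v_nn[OF t] c1_pos unfolding V_def
    by (smt (verit) mult_nonneg_nonneg)
  then have "(c2 * w t) / c2 \<le> V0 / c2" using c2_pos by (intro divide_right_mono) auto
  moreover have "(c2 * w t) / c2 = w t" by (rule nonzero_mult_div_cancel_left) (use c2_pos in simp)
  ultimately show ?thesis unfolding Bw_def by linarith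
qed

lemma x_KK: assumes t: "t \<ge> 0" shows "x t \<in> KK"
proof -
  have "u t \<in> {0..Bu}" "v t \<in> {0..Bv}" "w t \<in> {0..Bw}"
    using upos[OF t] vpos[OF t] wnn[OF t] u_bd[OF t] v_bd[OF t] w_bd[OF t] by auto
  then show ?thesis unfolding KK_def u_def v_def w_def by (cases "x t") auto
qed

lemma Dg_bound: obtains M where "M > 0" "\<And>z. z \<in> KK \<Longrightarrow> \<bar>Dg z\<bar> \<le> M"
proof -
  have "compact KK" unfolding KK_def by (intro compact_Times compact_Icc)
  moreover have "continuous_on KK Dg" unfolding Dg_def[abs_def] by (intro continuous_intros)
  ultimately have "compact (Dg ` KK)" by (rule compact_continuous_image[rotated])
  then have "bounded (Dg ` KK)" by (rule compact_imp_bounded)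
  then obtain M where "M > 0" "\<And>y. y \<in> Dg ` KK \<Longrightarrow> norm y \<le> M" by (auto simp: bounded_pos)
  then show ?thesis using that by auto
qed

lemma dgq: "t > 0 \<Longrightarrow> (gq has_real_derivative Dg (x t)) (at t)"
proof -
  assume t: "t > 0"
  have "((\<lambda>t. (u t - us)^2 + (v t - vs)^2) has_real_derivative
      2 * (u t - us) * (u t * (r1 * (1 - u t) - a12 * v t - a13 * w t))
    + 2 * (v t - vs) * (v t * (r2 * (1 - v t) + a21 * u t))) (at t)"
    by (rule DERIV_add[OF sq_deriv[OF dxc(1)[OF t]] sq_deriv[OF dxc(2)[OF t]]])
  moreover have "Dg (x t) = 2 * (u t - us) * (u t * (r1 * (1 - u t) - a12 * v t - a13 * w t))
    + 2 * (v t - vs) * (v t * (r2 * (1 - v t) + a21 * u t))" by (simp add: Dg_def u_def v_def w_def)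
  ultimately show ?thesis unfolding gq_def[abs_def] by simp
qed

lemma cgq: "continuous_on {0..} gq"
  unfolding gq_def[abs_def] using cu cv by (intro continuous_intros)

lemma gq_nn: "gq t \<ge> 0" unfolding gq_def by simp

lemma gq_lip:
  assumes M: "\<And>z. z \<in> KK \<Longrightarrow> \<bar>Dg z\<bar> \<le> M" and ab: "0 < a" "a \<le> b"
  shows "gq b - gq a \<le> M * (b - a)" "gq b - gq a \<ge> (- M) * (b - a)"
proof -
  have c: "continuous_on {a..b} gq" using cgq by (rule continuous_on_subset) (use ab in auto)
  have bd: "\<bar>Dg (x t)\<bar> \<le> M" if "a < t" for t using M x_KK that ab by auto
  have bd1: "Dg (x t) \<le> M" if "a < t" for t using bd[OF that] by linarith
  have bd2: "- M \<le> Dg (x t)" if "a < t" for t using bd[OF that] by linarith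
  have dd: "(gq has_real_derivative Dg (x t)) (at t)" if "a < t" for t using dgq that ab by simp
  show "gq b - gq a \<le> M * (b - a)"
    by (rule deriv_le[OF ab(2) c, where f'="\<lambda>t. Dg (x t)"]) (use dd bd1 in auto)
  show "gq b - gq a \<ge> (- M) * (b - a)"
    by (rule deriv_ge[OF ab(2) c, where f'="\<lambda>t. Dg (x t)"]) (use dd bd2 in auto)
qed

lemma mm_pos: "mm > 0" unfolding mm_def using pos c1_pos by simp

lemma V_drop:
  assumes ab: "0 < a" "a \<le> b" and g: "\<And>t. a \<le> t \<Longrightarrow> t \<le> b \<Longrightarrow> gq t \<ge> e"
  shows "V b - V a \<le> (- (mm * e)) * (b - a)"
proof (rule deriv_le[OF ab(2)])
  show "continuous_on {a..b} V" using cV by (rule continuous_on_subset) (use ab in auto)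
next
  fix t assume t: "a < t" "t < b"
  then show "(V has_real_derivative - (r1 * (u t - us)^2) - c1 * r2 * (v t - vs)^2 - k * w t) (at t)"
    using ab by (intro dV) linarith
  have kw: "k * w t \<ge> 0" using k_nonneg wnn[of t] ab t by auto
  have "mm * (u t - us)^2 \<le> r1 * (u t - us)^2" unfolding mm_def by (intro mult_right_mono) auto
  moreover have "mm * (v t - vs)^2 \<le> c1 * r2 * (v t - vs)^2" unfolding mm_def by (intro mult_right_mono) auto
  moreover have "mm * e \<le> mm * gq t" using g[of t] t mm_pos by (intro mult_left_mono) auto
  ultimately show "- (r1 * (u t - us)^2) - c1 * r2 * (v t - vs)^2 - k * w t \<le> - (mm * e)"
    using kw unfolding gq_def by (simp add: algebra_simps)
qed

definition "L = Inf (V ` {0..})"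

lemma L_le: "t \<ge> 0 \<Longrightarrow> L \<le> V t"
  unfolding L_def by (rule cInf_lower) (use V_nn in \<open>auto intro!: bdd_belowI[of _ 0]\<close>)

lemma L_nn: "L \<ge> 0"
  unfolding L_def by (rule cInf_greatest) (use V_nn in auto)

lemma V_lim: "(V \<longlongrightarrow> L) at_top"
proof (rule tendstoI)
  fix e :: real assume e: "e > 0"
  have "\<exists>y\<in>V ` {0..}. y < L + e"
    unfolding L_def by (rule cInf_lessD) (use e L_def in auto)
  then obtain t0 where t0: "t0 \<ge> 0" "V t0 < L + e" by auto
  show "\<forall>\<^sub>F t in at_top. dist (V t) L < e"
    unfolding eventually_at_top_linorder
  proof (intro exI[of _ t0] allI impI)
    fix t assume "t \<ge> t0"
    then have "V t \<le> V t0" "L \<le> V t" using V_mono[of t0 t] t0 L_le[of t] by auto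
    then show "dist (V t) L < e" using t0 by (simp add: dist_real_def)
  qed
qed

lemma gq_lim: "(gq \<longlongrightarrow> 0) at_top"
proof (rule ccontr)
  assume nc: "\<not> (gq \<longlongrightarrow> 0) at_top"
  obtain M where M: "M > 0" "\<And>z. z \<in> KK \<Longrightarrow> \<bar>Dg z\<bar> \<le> M" using Dg_bound by blast
  obtain e where e: "e > 0" "\<not> (\<forall>\<^sub>F t in at_top. dist (gq t) 0 < e)"
    using nc tendstoI by blast
  then have freq: "\<forall>N. \<exists>t\<ge>N. gq t \<ge> e"
    unfolding eventually_at_top_linorder by (auto simp: dist_real_def gq_nn not_less)
  define d where "d = e / (2 * M)"
  have d: "d > 0" unfolding d_def using e M by simp
  define eta where "eta = mm * (e / 2) * d"
  have eta: "eta > 0" unfolding eta_def using mm_pos e d by simp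
  have "\<forall>\<^sub>F t in at_top. dist (V t) L < eta" using V_lim eta tendstoD by blast
  then obtain T where T: "\<And>t. t \<ge> T \<Longrightarrow> dist (V t) L < eta"
    unfolding eventually_at_top_linorder by blast
  obtain t where t: "t \<ge> max T 1" "gq t \<ge> e" using freq by blast
  have tpos: "t > 0" using t by simp
  have g2: "gq s \<ge> e / 2" if "t \<le> s" "s \<le> t + d" for s
  proof -
    have "gq s - gq t \<ge> (- M) * (s - t)" using gq_lip(2)[OF M(2) tpos that(1)] .
    moreover have "M * (s - t) \<le> M * d" using that M by (intro mult_left_mono) auto
    moreover have "M * d = e / 2" unfolding d_def using M by simp
    ultimately show ?thesis using t by linarith
  qed
  have "V (t + d) - V t \<le> (- (mm * (e / 2))) * (t + d - t)"
    by (rule V_drop) (use tpos d g2 in auto)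
  then have "V (t + d) \<le> V t - eta" unfolding eta_def by simp
  moreover have "V t < L + eta" using T[of t] t by (auto simp: dist_real_def)
  moreover have "L \<le> V (t + d)" using L_le tpos d by simp
  ultimately show False by linarith
qed

lemma u_lim: "(u \<longlongrightarrow> us) at_top"
proof (rule sq_tendsto, rule tendsto_sandwich[where f="\<lambda>_. 0" and h=gq])
  show "\<forall>\<^sub>F t in at_top. 0 \<le> (u t - us)^2" by simp
  show "\<forall>\<^sub>F t in at_top. (u t - us)^2 \<le> gq t" by (simp add: gq_def)
qed (auto simp: gq_lim)

lemma v_lim: "(v \<longlongrightarrow> vs) at_top"
proof (rule sq_tendsto, rule tendsto_sandwich[where f="\<lambda>_. 0" and h=gq])
  show "\<forall>\<^sub>F t in at_top. 0 \<le> (v t - vs)^2" by simp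
  show "\<forall>\<^sub>F t in at_top. (v t - vs)^2 \<le> gq t" by (simp add: gq_def)
qed (auto simp: gq_lim)

lemma w_lim: "(w \<longlongrightarrow> L / c2) at_top"
proof -
  have pu: "((\<lambda>t. Phi us (u t)) \<longlongrightarrow> Phi us us) at_top"
    unfolding Phi_def using us_pos by (intro tendsto_intros u_lim) auto
  have pv: "((\<lambda>t. Phi vs (v t)) \<longlongrightarrow> Phi vs vs) at_top"
    unfolding Phi_def using vs_pos by (intro tendsto_intros v_lim) auto
  have "((\<lambda>t. (V t - Phi us (u t) - c1 * Phi vs (v t)) / c2) \<longlongrightarrow>
      (L - Phi us us - c1 * Phi vs vs) / c2) at_top"
    by (intro tendsto_intros V_lim pu pv) (use c2_pos in auto)
  moreover have "(\<lambda>t. (V t - Phi us (u t) - c1 * Phi vs (v t)) / c2) = w"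
    using c2_pos by (auto simp: fun_eq_iff V_def)
  moreover have "Phi us us = 0" "Phi vs vs = 0" using us_pos vs_pos by (auto simp: Phi_def)
  ultimately show ?thesis by simp
qed

lemma L_zero: "L = 0"
proof (rule ccontr)
  assume "L \<noteq> 0"
  then have Lp: "L > 0" using L_nn by simp
  define wl where "wl = L / c2"
  have wl: "wl > 0" unfolding wl_def using Lp c2_pos by simp
  define q where "q = us * a13 * wl / 2"
  have q: "q > 0" unfolding q_def using us_pos pos wl by simp
  have "((\<lambda>t. u t * (r1 * (1 - u t) - a12 * v t - a13 * w t)) \<longlongrightarrow>
      us * (r1 * (1 - us) - a12 * vs - a13 * wl)) at_top"
    unfolding wl_def by (intro tendsto_intros u_lim v_lim w_lim)
  moreover have "us * (r1 * (1 - us) - a12 * vs - a13 * wl) = - 2 * q"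
    using eq1 unfolding q_def by (simp add: algebra_simps)
  moreover have "- 2 * q < - q" using q by simp
  ultimately have "\<forall>\<^sub>F t in at_top. u t * (r1 * (1 - u t) - a12 * v t - a13 * w t) < - q"
    using order_tendstoD(2) by metis
  then obtain T where T: "\<And>t. t \<ge> T \<Longrightarrow> u t * (r1 * (1 - u t) - a12 * v t - a13 * w t) < - q"
    unfolding eventually_at_top_linorder by blast
  define T' where "T' = max T 1"
  define s where "s = T' + (u T' + 1) / q"
  have T'p: "T' > 0" "T' \<ge> T" unfolding T'_def by auto
  have uT: "u T' > 0" using upos T'p by simp
  have sT: "T' \<le> s" unfolding s_def using uT q by simp
  have "u s - u T' \<le> (- q) * (s - T')"
  proof (rule deriv_le[OF sT])
    show "continuous_on {T'..s} u" using cu by (rule continuous_on_subset) (use T'p in auto)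
  next
    fix t assume t: "T' < t" "t < s"
    then show "(u has_real_derivative u t * (r1 * (1 - u t) - a12 * v t - a13 * w t)) (at t)"
      using T'p by (intro dxc) linarith
    show "u t * (r1 * (1 - u t) - a12 * v t - a13 * w t) \<le> - q" using T[of t] t T'p by auto
  qed
  moreover have "(- q) * (s - T') = - (u T' + 1)" unfolding s_def using q by simp
  ultimately have "u s \<le> -1" by simp
  moreover have "u s > 0" using upos sT T'p by simp
  ultimately show False by simp
qed

lemma x_lim: "(x \<longlongrightarrow> (us, vs, 0)) at_top"
proof -
  have "((\<lambda>t. (u t, v t, w t)) \<longlongrightarrow> (us, vs, L / c2)) at_top"
    by (intro tendsto_Pair u_lim v_lim w_lim)
  moreover have "(\<lambda>t. (u t, v t, w t)) = x" by (simp add: fun_eq_iff u_def v_def w_def)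
  ultimately show ?thesis by (simp add: L_zero)
qed

end

lemma dist3_le:
  fixes a b c a' b' c' :: real
  shows "dist (a, b, c) (a', b', c') \<le> \<bar>a - a'\<bar> + \<bar>b - b'\<bar> + \<bar>c - c'\<bar>"
proof -
  have "dist (b, c) (b', c') \<le> \<bar>dist b b'\<bar> + \<bar>dist c c'\<bar>"
    unfolding dist_Pair_Pair by (rule sqrt_sum_squares_le_sum_abs)
  moreover have "dist (a, b, c) (a', b', c') \<le> \<bar>dist a a'\<bar> + \<bar>dist (b, c) (b', c')\<bar>"
    unfolding dist_Pair_Pair[of a "(b, c)"] by (rule sqrt_sum_squares_le_sum_abs)
  ultimately show ?thesis by (simp add: dist_real_def)
qed

lemma dist3_ge:
  fixes a b c a' b' c' :: real
  shows "\<bar>a - a'\<bar> \<le> dist (a, b, c) (a', b', c')" "\<bar>b - b'\<bar> \<le> dist (a, b, c) (a', b', c')"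
    "\<bar>c - c'\<bar> \<le> dist (a, b, c) (a', b', c')"
proof -
  show "\<bar>a - a'\<bar> \<le> dist (a, b, c) (a', b', c')"
    using dist_fst_le[of "(a, b, c)" "(a', b', c')"] by (simp add: dist_real_def)
  have "dist (b, c) (b', c') \<le> dist (a, b, c) (a', b', c')"
    using dist_snd_le[of "(a, b, c)" "(a', b', c')"] by simp
  moreover have "\<bar>b - b'\<bar> \<le> dist (b, c) (b', c')"
    using dist_fst_le[of "(b, c)" "(b', c')"] by (simp add: dist_real_def)
  moreover have "\<bar>c - c'\<bar> \<le> dist (b, c) (b', c')"
    using dist_snd_le[of "(b, c)" "(b', c')"] by (simp add: dist_real_def)
  ultimately show "\<bar>b - b'\<bar> \<le> dist (a, b, c) (a', b', c')" "\<bar>c - c'\<bar> \<le> dist (a, b, c) (a', b', c')"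
    by linarith+
qed

context params begin

definition "eta e = min (e / 3) (min (us / 2) (vs / 2))"
definition "mb e = min ((eta e)^2 / (5 * us)) (min (c1 * (eta e)^2 / (5 * vs)) (c2 * eta e))"
definition "KC = 2 / us + 2 * c1 / vs + c2"
definition "delta e = min 1 (min (us / 2) (min (vs / 2) (mb e / (2 * KC))))"

lemma eta_pos: "e > 0 \<Longrightarrow> eta e > 0"
  unfolding eta_def using us_pos vs_pos by simp

lemma mb_pos: "e > 0 \<Longrightarrow> mb e > 0"
  unfolding mb_def using eta_pos[of e] us_pos vs_pos c1_pos c2_pos by simp

lemma KC_pos: "KC > 0"
  unfolding KC_def using us_pos vs_pos c1_pos c2_pos by (simp add: add_pos_pos)

lemma delta_pos: "e > 0 \<Longrightarrow> delta e > 0"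
  unfolding delta_def using mb_pos[of e] KC_pos us_pos vs_pos by simp

lemma init_from_dist:
  assumes "z \<in> nonneg_orthant" "dist z (us, vs, 0) < delta e"
  shows "fst z > 0" "fst (snd z) > 0" "snd (snd z) \<ge> 0"
proof -
  obtain a b c where z: "z = (a, b, c)" by (cases z) auto
  have h: "\<bar>a - us\<bar> < us / 2" "\<bar>b - vs\<bar> < vs / 2"
    using dist3_ge(1,2)[where a=a and b=b and c=c and a'=us and b'=vs and c'=0] assms(2) unfolding z delta_def by linarith+
  have "a > 0" using h(1) by arith
  moreover have "b > 0" using h(2) by arith
  ultimately show "fst z > 0" "fst (snd z) > 0" using z by auto
  show "snd (snd z) \<ge> 0" using assms(1) z by (simp add: nonneg_orthant_def)
qed

end

context traj begin

lemma stab: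
  assumes e: "e > 0" and d: "dist (x 0) (us, vs, 0) < delta e" and t: "t \<ge> 0"
  shows "dist (x t) (us, vs, 0) < e"
proof -
  define de where "de = delta e"
  have de: "de > 0" "de \<le> 1" "de \<le> us / 2" "de \<le> vs / 2" "de \<le> mb e / (2 * KC)"
    unfolding de_def delta_def using delta_pos[OF e] by (auto simp: delta_def)
  have x0: "x 0 = (u 0, v 0, w 0)" by (simp add: u_def v_def w_def)
  have du: "\<bar>u 0 - us\<bar> < de" and dv: "\<bar>v 0 - vs\<bar> < de" and dw: "\<bar>w 0 - 0\<bar> < de"
    using dist3_ge[where a="u 0" and b="v 0" and c="w 0" and a'=us and b'=vs and c'=0] d unfolding x0 de_def by linarith+
  have u0: "u 0 \<ge> us / 2" using du de by linarith
  have v0: "v 0 \<ge> vs / 2" using dv de by linarith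
  have de2: "de^2 \<le> de" using de by (simp add: power2_eq_square mult_le_cancel_left1)
  have "Phi us (u 0) \<le> (u 0 - us)^2 / u 0" using Phi_le us_pos upos[of 0] by simp
  also have "\<dots> \<le> de^2 / (us / 2)"
  proof (rule frac_le)
    show "(u 0 - us)^2 \<le> de^2" using du by (simp add: abs_le_square_iff power2_le_iff_abs_le less_imp_le)
  qed (use u0 us_pos in auto)
  also have "\<dots> \<le> 2 * de / us" using de2 us_pos by (simp add: field_simps)
  finally have pu0: "Phi us (u 0) \<le> 2 * de / us" .
  have "Phi vs (v 0) \<le> (v 0 - vs)^2 / v 0" using Phi_le vs_pos vpos[of 0] by simp
  also have "\<dots> \<le> de^2 / (vs / 2)"
  proof (rule frac_le)
    show "(v 0 - vs)^2 \<le> de^2" using dv by (simp add: abs_le_square_iff power2_le_iff_abs_le less_imp_le)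
  qed (use v0 vs_pos in auto)
  also have "\<dots> \<le> 2 * de / vs" using de2 vs_pos by (simp add: field_simps)
  finally have pv0: "Phi vs (v 0) \<le> 2 * de / vs" .
  have w0: "w 0 \<le> de" using dw by simp
  have "V 0 \<le> 2 * de / us + c1 * (2 * de / vs) + c2 * de"
    unfolding V_def using pu0 pv0 w0 c1_pos c2_pos
    by (intro add_mono mult_left_mono) auto
  also have "\<dots> = KC * de" unfolding KC_def by (simp add: field_simps)
  also have "\<dots> \<le> KC * (mb e / (2 * KC))" using de KC_pos by (intro mult_left_mono) auto
  also have "\<dots> = mb e / 2" using KC_pos by simp
  finally have "V 0 \<le> mb e / 2" .
  then have Vt: "V t < mb e" using V_mono[of 0 t] t mb_pos[OF e] by simp
  have et: "eta e > 0" "eta e \<le> us / 2" "eta e \<le> vs / 2" "eta e \<le> e / 3"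
    using eta_pos[OF e] by (auto simp: eta_def)
  have mbu: "mb e \<le> (eta e)^2 / (5 * us)" and mbv: "mb e \<le> c1 * (eta e)^2 / (5 * vs)"
    and mbw: "mb e \<le> c2 * eta e" unfolding mb_def by auto
  have nnu: "Phi us (u t) \<ge> 0" and nnv: "c1 * Phi vs (v t) \<ge> 0" and nnw: "c2 * w t \<ge> 0"
    using Phi_u_nn[OF t] Phi_v_nn[OF t] c1_pos c2_pos wnn[OF t] by auto
  have cu: "\<bar>u t - us\<bar> < eta e"
  proof (rule ccontr)
    assume "\<not> ?thesis"
    then have "Phi us (u t) \<ge> (eta e)^2 / (5 * us)"
      using Phi_sep[OF us_pos upos[OF t] et(1,2)] by simp
    then show False using Vt mbu nnv nnw unfolding V_def by linarith
  qed
  have cv: "\<bar>v t - vs\<bar> < eta e"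
  proof (rule ccontr)
    assume "\<not> ?thesis"
    then have "Phi vs (v t) \<ge> (eta e)^2 / (5 * vs)"
      using Phi_sep[OF vs_pos vpos[OF t] et(1,3)] by simp
    then have "c1 * Phi vs (v t) \<ge> c1 * ((eta e)^2 / (5 * vs))" using c1_pos by (intro mult_left_mono) auto
    then show False using Vt mbv nnu nnw unfolding V_def by simp
  qed
  have cw: "\<bar>w t - 0\<bar> < eta e"
  proof -
    have "c2 * w t < c2 * eta e" using Vt mbw nnu nnv unfolding V_def by linarith
    then have "w t < eta e" using c2_pos by simp
    then show ?thesis using wnn[OF t] by simp
  qed
  have xt: "x t = (u t, v t, w t)" by (simp add: u_def v_def w_def)
  have "dist (x t) (us, vs, 0) \<le> \<bar>u t - us\<bar> + \<bar>v t - vs\<bar> + \<bar>w t - 0\<bar>"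
    unfolding xt by (rule dist3_le)
  then show ?thesis using cu cv cw et(4) by linarith
qed

end

theorem theorem1:
  fixes r1 r2 mu a12 a13 a21 a31 :: real
  assumes "r1 > 0" "r2 > 0" "mu > 0" "a12 > 0" "a13 > 0" "a21 > 0" "a31 > 0"
    and "r1 > a12"
    and "mu \<ge> a31 * (r2 * (r1 - a12) / (r1 * r2 + a12 * a21))"
  shows "let us = r2 * (r1 - a12) / (r1 * r2 + a12 * a21);
             vs = (r1 * r2 + r1 * a21) / (r1 * r2 + a12 * a21);
             p = (r1, r2, mu, a12, a13, a21, a31)
         in us > 0 \<and> vs > 0 \<and> field p (us, vs, 0) = (0, 0, 0) \<and>
            globally_asymptotically_stable p (us, vs, 0)"
proof -
  interpret P: params r1 r2 mu a12 a13 a21 a31 using assms by unfold_locales auto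
  have trj: "traj r1 r2 mu a12 a13 a21 a31 x"
    if "is_solution (r1, r2, mu, a12, a13, a21, a31) x" "fst (x 0) > 0" "fst (snd (x 0)) > 0"
       "snd (snd (x 0)) \<ge> 0" for x
    using that P.params_axioms by (intro traj.intro traj_axioms.intro) auto
  have f1: "r1 * P.us * (1 - P.us) - a12 * P.us * P.vs - a13 * P.us * 0 = P.us * (r1 * (1 - P.us) - a12 * P.vs)"
    by (simp add: algebra_simps)
  have f2: "r2 * P.vs * (1 - P.vs) + a21 * P.us * P.vs = P.vs * (r2 * (1 - P.vs) + a21 * P.us)"
    by (simp add: algebra_simps)
  have fld: "field (r1, r2, mu, a12, a13, a21, a31) (P.us, P.vs, 0) = (0, 0, 0)"
    unfolding field_def prod.case f1 f2 P.eq1 P.eq2 by simp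
  have stab: "stable (r1, r2, mu, a12, a13, a21, a31) (P.us, P.vs, 0)"
    unfolding stable_def
  proof (intro allI impI)
    fix e :: real assume e: "e > 0"
    show "\<exists>\<delta>>0. \<forall>x. is_solution (r1, r2, mu, a12, a13, a21, a31) x \<and> x 0 \<in> nonneg_orthant \<and>
        dist (x 0) (P.us, P.vs, 0) < \<delta> \<longrightarrow> (\<forall>t\<ge>0. dist (x t) (P.us, P.vs, 0) < e)"
    proof (intro exI[of _ "P.delta e"] conjI allI impI)
      show "P.delta e > 0" using P.delta_pos[OF e] .
      fix x and t :: real assume H: "is_solution (r1, r2, mu, a12, a13, a21, a31) x \<and> x 0 \<in> nonneg_orthant \<and>
        dist (x 0) (P.us, P.vs, 0) < P.delta e" and t: "t \<ge> 0"
      have T: "traj r1 r2 mu a12 a13 a21 a31 x"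
        using H P.init_from_dist[of "x 0" e] by (intro trj) auto
      show "dist (x t) (P.us, P.vs, 0) < e"
        using traj.stab[OF T e _ t] H by auto
    qed
  qed
  have conv: "\<forall>x. is_solution (r1, r2, mu, a12, a13, a21, a31) x \<and> fst (x 0) > 0 \<and>
      fst (snd (x 0)) > 0 \<and> snd (snd (x 0)) \<ge> 0 \<longrightarrow> (x \<longlongrightarrow> (P.us, P.vs, 0)) at_top"
    using traj.x_lim[OF trj] by blast
  show ?thesis
    unfolding Let_def P.us_def[symmetric] P.vs_def[symmetric] globally_asymptotically_stable_def
    using P.us_pos P.vs_pos fld stab conv by blast
qed

end
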